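(* Let $p^*\in(0,1)$ be the solution of $p^{(2-p)/(1-p)}=(1-p)^2$ ($p^*\approx0.594$). For every $p\in[p^*,1)$ and every integer $\ell\ge0$, \[ \int_{p^{1/(1-p)}}^1\frac{(1-t)^\ell}{t^p}\,dt\ \ge\ (1-p)^\ell . \] *)

theory Defs
  imports "HOL-Analysis.Analysis"
begin

definition p_star :: real where
  "p_star = (THE p. 0 < p \<and> p < 1 \<and> p powr ((2 - p) / (1 - p)) = (1 - p)^2)"

end

theory Submission imports Defs begin

definition hh :: "real \<Rightarrow> real" where
  "hh p = ((2 - p) / (1 - p)) * ln p - 2 * ln (1 - p)"

definition kk :: "real \<Rightarrow> real" where
  "kk p = ln p + 2 / p - 1 - p"

lemma kk_pos: assumes "0 < x" "x < 1" shows "kk x > 0"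
proof -
  have "(\<lambda>y. - kk y) x < (\<lambda>y. - kk y) 1"
  proof (rule DERIV_pos_imp_increasing[OF assms(2)])
    fix y assume y: "x \<le> y" "y \<le> 1"
    hence y0: "y > 0" using assms by auto
    have "((\<lambda>y. - kk y) has_real_derivative (- (1/y - 2/y^2 - 1))) (at y)"
      unfolding kk_def using y0
      by (auto intro!: derivative_eq_intros simp: field_simps power2_eq_square)
    moreover have "- (1/y - 2/y^2 - 1) > 0"
    proof -
      have "1/y - 2/y^2 - 1 = (y - 2 - y^2) / y^2" using y0 by (simp add: field_simps power2_eq_square)
      moreover have "y - 2 - y^2 < 0" using y assms zero_le_power2[of y] by linarith
      ultimately show ?thesis using y0 by (simp add: divide_neg_pos)
    qed
    ultimately show "\<exists>d. ((\<lambda>y. - kk y) has_real_derivative d) (at y) \<and> d > 0" by blast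
  qed
  thus ?thesis by (simp add: kk_def)
qed

lemma e1_gen: fixes w z A L :: real assumes "w \<noteq> 0" "z \<noteq> 0"
  shows "1/w^2 * L + A/w * (1/z) + 2 * (1/w) = (L + A*w/z + 2*w)/w^2"
  using assms by (simp add: field_simps power2_eq_square)

lemma e2_gen: fixes z :: real assumes "z \<noteq> 0"
  shows "(2-z)*(1-z)/z + 2*(1-z) = 2/z - 1 - z"
proof -
  have "(2-z)*(1-z)/z = (2 - 3*z + z*z)/z" by (simp add: algebra_simps)
  also have "... = 2/z - 3 + z" using assms by (simp add: diff_divide_distrib add_divide_distrib)
  finally show ?thesis by simp
qed

lemma hh_mono: assumes "0 < x" "x < y" "y < 1" shows "hh x < hh y"
proof (rule DERIV_pos_imp_increasing[OF assms(2)])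
  fix z assume z: "x \<le> z" "z \<le> y"
  hence z0: "0 < z" "z < 1" using assms by auto
  have nz: "1 - z \<noteq> 0" "z \<noteq> 0" using z0 by auto
  have d1: "((\<lambda>p. (2-p)/(1-p)) has_real_derivative 1/(1-z)^2) (at z)"
    using nz by (auto intro!: derivative_eq_intros simp: power2_eq_square divide_simps)
  have d2: "(ln has_real_derivative 1/z) (at z)" using z0 by (auto intro!: derivative_eq_intros)
  have d3: "((\<lambda>p. ln (1-p)) has_real_derivative -1/(1-z)) (at z)"
    using z0 by (auto intro!: derivative_eq_intros)
  have d: "(hh has_real_derivative (1/(1-z)^2 * ln z + (2-z)/(1-z) * (1/z) + 2 * (1/(1-z)))) (at z)"
  proof -
    have "((\<lambda>p. (2-p)/(1-p) * ln p - 2 * ln (1-p)) has_real_derivative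
        (1/(1-z)^2 * ln z + 1/z * ((2-z)/(1-z))) - 2 * (-1/(1-z))) (at z)"
      by (intro DERIV_diff DERIV_mult d1 d2 DERIV_cmult d3)
    thus ?thesis unfolding hh_def by (simp add: algebra_simps)
  qed
  have e1: "1/(1-z)^2 * ln z + (2-z)/(1-z) * (1/z) + 2 * (1/(1-z)) = (ln z + (2-z)*(1-z)/z + 2*(1-z))/(1-z)^2"
    using nz by (rule e1_gen)
  have e2: "(2-z)*(1-z)/z + 2*(1-z) = 2/z - 1 - z"
    using nz by (intro e2_gen)
  have e: "1/(1-z)^2 * ln z + (2-z)/(1-z) * (1/z) + 2 * (1/(1-z)) = kk z / (1 - z)^2"
    unfolding e1 kk_def using e2 by (simp add: add.assoc)
  have "(hh has_real_derivative (kk z / (1 - z)^2)) (at z)" using d e by simp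
  moreover have "kk z / (1 - z)^2 > 0" using kk_pos[OF z0] z0 by simp
  ultimately show "\<exists>d. (hh has_real_derivative d) (at z) \<and> d > 0" by blast
qed

lemma powr_ge_iff_hh: fixes p :: real assumes "0 < p" "p < 1"
  shows "(p powr ((2 - p) / (1 - p)) \<ge> (1 - p)^2) \<longleftrightarrow> hh p \<ge> 0"
    and "(p powr ((2 - p) / (1 - p)) = (1 - p)^2) \<longleftrightarrow> hh p = 0"
proof -
  have a: "p powr ((2 - p) / (1 - p)) = exp (((2 - p) / (1 - p)) * ln p)" using assms by (simp add: powr_def)
  have b: "(1 - p)^2 = exp (2 * ln (1 - p))"
  proof -
    have "(1 - p)^2 = exp (ln ((1-p)^2))" using assms by simp
    also have "ln ((1-p)^2) = 2 * ln (1-p)" using assms by (simp add: ln_realpow)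
    finally show ?thesis .
  qed
  show "(p powr ((2 - p) / (1 - p)) \<ge> (1 - p)^2) \<longleftrightarrow> hh p \<ge> 0"
    unfolding a b hh_def by simp
  show "(p powr ((2 - p) / (1 - p)) = (1 - p)^2) \<longleftrightarrow> hh p = 0"
    unfolding a b hh_def by simp
qed

lemma hh_half: "hh (1/2) < 0"
  unfolding hh_def by simp

lemma hh_twothirds: "hh (2/3) > 0"
proof -
  have "(2 - 2/3) / (1 - 2/3) = (4::real)" by simp
  hence "hh (2/3) = 4 * ln (2/3) - 2 * ln (1/3)" unfolding hh_def by simp
  also have "4 * ln (2/3::real) = ln ((2/3)^4)" by (simp add: ln_realpow)
  also have "2 * ln (1/3::real) = ln ((1/3)^2)" by (simp add: ln_realpow)
  finally have "hh (2/3) = ln ((2/3::real)^4) - ln ((1/3)^2)" .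
  moreover have "ln ((1/3::real)^2) < ln ((2/3)^4)" by (subst ln_less_cancel_iff) (auto simp: power2_eq_square eval_nat_numeral)
  ultimately show ?thesis by simp
qed

lemma p_star_props: "0 < p_star" "p_star < 1" "hh p_star = 0"
proof -
  have "continuous_on {1/2..2/3} hh" unfolding hh_def
    by (intro continuous_intros) auto
  then obtain r where r: "1/2 \<le> r" "r \<le> 2/3" "hh r = 0"
    using IVT'[of hh "1/2" 0 "2/3"] hh_half hh_twothirds by force
  have r01: "0 < r" "r < 1" using r by auto
  have "p_star = r" unfolding p_star_def
  proof (rule the_equality)
    show "0 < r \<and> r < 1 \<and> r powr ((2 - r) / (1 - r)) = (1 - r)^2"
      using r01 powr_ge_iff_hh(2)[OF r01] r by auto
  next
    fix q :: real assume q: "0 < q \<and> q < 1 \<and> q powr ((2 - q) / (1 - q)) = (1 - q)^2"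
    hence "hh q = 0" using powr_ge_iff_hh(2)[of q] by auto
    thus "q = r" using hh_mono[of q r] hh_mono[of r "q::real"] q r01 r
      by (cases q r rule: linorder_cases) auto
  qed
  thus "0 < p_star" "p_star < 1" "hh p_star = 0" using r01 r by auto
qed

lemma key_ineq: assumes "p_star \<le> p" "p < 1"
  shows "p powr ((2 - p) / (1 - p)) \<ge> (1 - p)^2" "0 < p"
proof -
  show p0: "0 < p" using p_star_props assms by linarith
  have "hh p \<ge> 0"
  proof (cases "p = p_star")
    case True thus ?thesis using p_star_props by simp
  next
    case False thus ?thesis using hh_mono[of p_star p] p_star_props assms by auto
  qed
  thus "p powr ((2 - p) / (1 - p)) \<ge> (1 - p)^2" using powr_ge_iff_hh(1)[OF p0 assms(2)] by simp
qed

lemma tangent_ineq: fixes c x :: real assumes "c > 0" "x \<ge> 0"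
  shows "c^l + real l * c^(l-1) * (x - c) \<le> x^l"
proof (cases l)
  case 0 thus ?thesis by simp
next
  case (Suc m)
  have "-1 \<le> x/c - 1" using assms by simp
  from Bernoulli_inequality[OF this, of l]
  have "1 + real l * (x/c - 1) \<le> (x/c)^l" by simp
  hence "c^l * (1 + real l * (x/c - 1)) \<le> c^l * (x/c)^l"
    using assms by (intro mult_left_mono) auto
  also have "c^l * (x/c)^l = x^l" using assms by (simp add: power_divide)
  also have "c^l * (1 + real l * (x/c - 1)) = c^l + real l * (c^l * (x/c - 1))" by (simp add: algebra_simps)
  also have "c^l * (x/c - 1) = c^(l-1) * (x - c)"
    using assms Suc by (simp add: field_simps)
  finally show ?thesis by (simp add: mult.assoc)
qed

lemma powr_has_integral_ab: fixes a b r :: real assumes "0 < a" "a \<le> b" "r \<noteq> -1"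
  shows "((\<lambda>t. t powr r) has_integral (b powr (r+1)/(r+1) - a powr (r+1)/(r+1))) {a..b}"
proof (rule fundamental_theorem_of_calculus[OF assms(2)])
  fix x assume x: "x \<in> {a..b}"
  hence x0: "x > 0" using assms by auto
  have r1: "r + 1 \<noteq> 0" using assms by linarith
  have "((\<lambda>t. t powr (r+1)/(r+1)) has_real_derivative x powr r) (at x)"
    using x0 r1 by (auto intro!: derivative_eq_intros)
  thus "((\<lambda>t. t powr (r+1)/(r+1)) has_vector_derivative x powr r) (at x within {a..b})"
    by (simp add: has_real_derivative_iff_has_vector_derivative has_vector_derivative_at_within)
qed

theorem lemma4:
  fixes p :: real and l :: nat
  assumes "p_star \<le> p" and "p < 1"
  shows "integral {p powr (1 / (1 - p))..1} (\<lambda>t. (1 - t) ^ l / t powr p) \<ge> (1 - p) ^ l"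
proof -
  note k = key_ineq[OF assms]
  have p0: "0 < p" by (rule k(2))
  define c where "c = 1 - p"
  have c0: "c > 0" using assms c_def by simp
  define a where "a = p powr (1 / (1 - p))"
  have a0: "a > 0" using p0 a_def by simp
  have a1: "a < 1"
  proof -
    have "p powr (1/(1-p)) < 1 powr (1/(1-p))" using p0 assms by (intro powr_less_mono2) auto
    thus ?thesis using a_def by simp
  qed
  have ap: "a powr (1 - p) = p" using assms p0 unfolding a_def by (simp add: powr_powr)
  have ap2: "a powr (2 - p) = p powr ((2 - p) / (1 - p))" using assms p0 unfolding a_def
    by (simp add: powr_powr)
  have I0: "((\<lambda>t. t powr (-p)) has_integral 1) {a..1}"
    using powr_has_integral_ab[OF a0 _, of 1 "-p"] a1 assms ap by (simp add: divide_simps)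
  have I1: "((\<lambda>t. t powr (1-p)) has_integral ((1 - a powr (2-p))/(2-p))) {a..1}"
    using powr_has_integral_ab[OF a0 _, of 1 "1-p"] a1 assms
    by (simp add: diff_divide_distrib)
  have I1le: "(1 - a powr (2-p))/(2-p) \<le> p"
  proof -
    have "1 - a powr (2-p) \<le> p * (2 - p)" using k(1) ap2 by (simp add: power2_eq_square algebra_simps)
    thus ?thesis using assms by (simp add: divide_simps mult.commute)
  qed
  define g where "g t = c^l * t powr (-p) + real l * c^(l-1) * (p * t powr (-p) - t powr (1-p))" for t
  have Ig: "(g has_integral (c^l * 1 + real l * c^(l-1) * (p * 1 - (1 - a powr (2-p))/(2-p)))) {a..1}"
    unfolding g_def
    by (intro has_integral_add has_integral_mult_right has_integral_diff I0 I1)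
  have f_int: "(\<lambda>t. (1 - t) ^ l / t powr p) integrable_on {a..1}"
    using a0 by (intro integrable_continuous_interval continuous_intros) auto
  have le: "g t \<le> (1 - t) ^ l / t powr p" if t: "t \<in> {a..1}" for t
  proof -
    have t0: "t > 0" using t a0 by auto
    have e1: "t powr (1-p) = t * t powr (-p)" using t0 powr_add[of t 1 "-p"] by simp
    have "g t = (c^l + real l * c^(l-1) * ((1 - t) - c)) * t powr (-p)"
      unfolding g_def e1 c_def by (simp add: algebra_simps)
    also have "... \<le> (1 - t)^l * t powr (-p)"
      using tangent_ineq[OF c0, of "1 - t" l] t by (intro mult_right_mono) auto
    also have "... = (1 - t) ^ l / t powr p" using t0 by (simp add: powr_minus divide_inverse)
    finally show ?thesis .
  qed
  have "c^l * 1 + real l * c^(l-1) * (p * 1 - (1 - a powr (2-p))/(2-p)) \<le> integral {a..1} (\<lambda>t. (1 - t) ^ l / t powr p)"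
    using has_integral_le[OF Ig integrable_integral[OF f_int]] le by blast
  moreover have "c^l \<le> c^l * 1 + real l * c^(l-1) * (p * 1 - (1 - a powr (2-p))/(2-p))"
    using I1le c0 by simp
  ultimately show ?thesis unfolding a_def c_def by linarith
qed

end
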